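(* Let $T,S\in\mathcal{B}_A(\mathcal{H})$. Then $$\omega_A(TS)\le \tfrac12\Big(\omega_A(ST)+\|T\|_A\|S\|_A\Big).$$
   Context: $\mathcal{H}$ is a complex Hilbert space with inner product $\langle\cdot,\cdot\rangle$, and $A$ is a fixed nonzero positive bounded operator on $\mathcal{H}$. Set $\langle x,y\rangle_A=\langle Ax,y\rangle$ and $\|x\|_A=\|A^{1/2}x\|$. $\mathcal{B}_A(\mathcal{H})$ is the set of bounded operators $T$ for which there exists a bounded $S$ with $\langle Tx,y\rangle_A=\langle x,Sy\rangle_A$ for all $x,y$. For an operator $T$ with $\|Tx\|_A\le\lambda\|x\|_A$ for some $\lambda>0$ and all $x$, $\|T\|_A=\sup\{\|Tx\|_A: \|x\|_A=1\}$, and $\omega_A(T)=\sup\{|\langle Tx,x\rangle_A|:\|x\|_A=1\}$. *)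

theory Defs
  imports Complex_Main
begin

text \<open>A complex Hilbert space is modelled on a type 'a (an abelian group) together with
  a complex scalar multiplication sc and an inner product ip (linear in the first argument,
  conjugate symmetric, positive definite), complete for the induced norm.\<close>

definition hnorm :: "('a \<Rightarrow> 'a \<Rightarrow> complex) \<Rightarrow> 'a \<Rightarrow> real" where
  "hnorm ip x = sqrt (Re (ip x x))"

definition complex_hilbert_space ::
  "(complex \<Rightarrow> 'a::ab_group_add \<Rightarrow> 'a) \<Rightarrow> ('a \<Rightarrow> 'a \<Rightarrow> complex) \<Rightarrow> bool" where
  "complex_hilbert_space sc ip \<longleftrightarrow>
     (\<forall>x. sc 1 x = x) \<and>
     (\<forall>a b x. sc a (sc b x) = sc (a * b) x) \<and>
     (\<forall>a b x. sc (a + b) x = sc a x + sc b x) \<and>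
     (\<forall>a x y. sc a (x + y) = sc a x + sc a y) \<and>
     (\<forall>x y z. ip (x + y) z = ip x z + ip y z) \<and>
     (\<forall>a x y. ip (sc a x) y = a * ip x y) \<and>
     (\<forall>x y. ip y x = cnj (ip x y)) \<and>
     (\<forall>x. Im (ip x x) = 0 \<and> Re (ip x x) \<ge> 0) \<and>
     (\<forall>x. ip x x = 0 \<longrightarrow> x = 0) \<and>
     (\<forall>f :: nat \<Rightarrow> 'a.
        (\<forall>e>0. \<exists>N. \<forall>m\<ge>N. \<forall>n\<ge>N. hnorm ip (f m - f n) < e) \<longrightarrow>
        (\<exists>l. \<forall>e>0. \<exists>N. \<forall>n\<ge>N. hnorm ip (f n - l) < e))"

definition bounded_op ::
  "(complex \<Rightarrow> 'a::ab_group_add \<Rightarrow> 'a) \<Rightarrow> ('a \<Rightarrow> 'a \<Rightarrow> complex) \<Rightarrow> ('a \<Rightarrow> 'a) \<Rightarrow> bool" where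
  "bounded_op sc ip T \<longleftrightarrow>
     (\<forall>x y. T (x + y) = T x + T y) \<and> (\<forall>a x. T (sc a x) = sc a (T x)) \<and>
     (\<exists>C. \<forall>x. hnorm ip (T x) \<le> C * hnorm ip x)"

definition positive_op ::
  "(complex \<Rightarrow> 'a::ab_group_add \<Rightarrow> 'a) \<Rightarrow> ('a \<Rightarrow> 'a \<Rightarrow> complex) \<Rightarrow> ('a \<Rightarrow> 'a) \<Rightarrow> bool" where
  "positive_op sc ip A \<longleftrightarrow> bounded_op sc ip A \<and>
     (\<forall>x. Im (ip (A x) x) = 0 \<and> Re (ip (A x) x) \<ge> 0)"

text \<open>\<open>\<langle>x,y\<rangle>_A = \<langle>Ax,y\<rangle>\<close> and \<open>\<parallel>x\<parallel>_A = \<parallel>A^{1/2}x\<parallel> = sqrt \<langle>Ax,x\<rangle>\<close>.\<close>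
definition A_ip :: "('a \<Rightarrow> 'a \<Rightarrow> complex) \<Rightarrow> ('a \<Rightarrow> 'a) \<Rightarrow> 'a \<Rightarrow> 'a \<Rightarrow> complex" where
  "A_ip ip A x y = ip (A x) y"

definition A_norm :: "('a \<Rightarrow> 'a \<Rightarrow> complex) \<Rightarrow> ('a \<Rightarrow> 'a) \<Rightarrow> 'a \<Rightarrow> real" where
  "A_norm ip A x = sqrt (Re (ip (A x) x))"

definition BA ::
  "(complex \<Rightarrow> 'a::ab_group_add \<Rightarrow> 'a) \<Rightarrow> ('a \<Rightarrow> 'a \<Rightarrow> complex) \<Rightarrow> ('a \<Rightarrow> 'a) \<Rightarrow> ('a \<Rightarrow> 'a) set" where
  "BA sc ip A = {T. bounded_op sc ip T \<and>
     (\<exists>S. bounded_op sc ip S \<and> (\<forall>x y. A_ip ip A (T x) y = A_ip ip A x (S y)))}"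

definition A_opnorm :: "('a \<Rightarrow> 'a \<Rightarrow> complex) \<Rightarrow> ('a \<Rightarrow> 'a) \<Rightarrow> ('a \<Rightarrow> 'a) \<Rightarrow> real" where
  "A_opnorm ip A T = Sup {A_norm ip A (T x) | x. A_norm ip A x = 1}"

definition A_numrad :: "('a \<Rightarrow> 'a \<Rightarrow> complex) \<Rightarrow> ('a \<Rightarrow> 'a) \<Rightarrow> ('a \<Rightarrow> 'a) \<Rightarrow> real" where
  "A_numrad ip A T = Sup {cmod (A_ip ip A (T x) x) | x. A_norm ip A x = 1}"

end

theory Submission
  imports Defs
begin


locale semi =
  fixes sc :: "complex \<Rightarrow> 'a::ab_group_add \<Rightarrow> 'a" and f :: "'a \<Rightarrow> 'a \<Rightarrow> complex"
  assumes sc_addl: "\<And>a b x. sc (a+b) x = sc a x + sc b x"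
    and sc_addr: "\<And>a x y. sc a (x+y) = sc a x + sc a y"
    and sc_assoc: "\<And>a b x. sc a (sc b x) = sc (a*b) x"
    and sc_one: "\<And>x. sc 1 x = x"
    and f_add: "\<And>x y z. f (x+y) z = f x z + f y z"
    and f_sc: "\<And>a x y. f (sc a x) y = a * f x y"
    and f_sym: "\<And>x y. f y x = cnj (f x y)"
    and f_im: "\<And>x. Im (f x x) = 0"
    and f_re: "\<And>x. Re (f x x) \<ge> 0"
begin

abbreviation nrm where "nrm x \<equiv> sqrt (Re (f x x))"

lemma f_zero[simp]: "f 0 y = 0"
  using f_add[of 0 0 y] by simp

lemma f_minus: "f (- x) y = - f x y"
proof -
  have "f x y + f (-x) y = 0" using f_add[of x "-x" y] by simp
  thus ?thesis using neg_eq_iff_add_eq_0[of "f x y" "f (-x) y"] by simp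
qed

lemma f_diff: "f (x - y) z = f x z - f y z"
  using f_add[of x "-y" z] f_minus[of y z] by simp

lemma f_add2: "f x (y+z) = f x y + f x z"
  by (metis f_add f_sym complex_cnj_add)

lemma f_diff2: "f x (y-z) = f x y - f x z"
  by (metis f_diff f_sym complex_cnj_diff)

lemma f_sc2: "f x (sc a y) = cnj a * f x y"
  by (metis f_sc f_sym complex_cnj_mult)

lemma f_self: "f x x = complex_of_real (nrm x ^ 2)"
  using f_im[of x] f_re[of x] by (simp add: complex_eq_iff real_sqrt_pow2)

lemma nrm_nonneg: "nrm x \<ge> 0" using f_re by simp

lemma cs: "cmod (f x y) \<le> nrm x * nrm y"
proof -
  define c where "c = f x y"
  define a where "a = Re (f x x)"
  define q where "q = Re (f y y)"
  define b where "b = (cmod c)^2"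
  have a0: "a \<ge> 0" and q0: "q \<ge> 0" using f_re a_def q_def by auto
  have key: "0 \<le> a - 2*s*b + s^2*b*q" for s :: real
  proof -
    define z where "z = x - sc (complex_of_real s * c) y"
    have "f z z = f x x - complex_of_real s * c * f y x - cnj (complex_of_real s * c) * f x y
        + (complex_of_real s * c) * cnj (complex_of_real s * c) * f y y"
      unfolding z_def by (simp add: f_diff f_diff2 f_sc f_sc2 algebra_simps)
    also have "\<dots> = complex_of_real (a - 2*s*b + s^2*b*q)"
    proof -
      have 1: "f y x = cnj c" using f_sym[of x y] c_def by simp
      have 2: "f x x = complex_of_real a" "f y y = complex_of_real q"
        using f_im[of x] f_im[of y] a_def q_def by (simp_all add: complex_eq_iff)
      have 3: "c * cnj c = complex_of_real b" unfolding b_def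
        by (rule complex_norm_square[symmetric])
      have "f x x - complex_of_real s * c * f y x - cnj (complex_of_real s * c) * f x y
        + (complex_of_real s * c) * cnj (complex_of_real s * c) * f y y
        = complex_of_real a - 2 * complex_of_real s * (c * cnj c) + (complex_of_real s)^2 * (c * cnj c) * complex_of_real q"
        using 1 2 c_def by (simp add: algebra_simps power2_eq_square)
      also have "\<dots> = complex_of_real (a - 2*s*b + s^2*b*q)" using 3 by simp
      finally show ?thesis .
    qed
    finally show ?thesis using f_re[of z] by simp
  qed
  have b0: "b \<ge> 0" by (simp add: b_def)
  have "b \<le> a * q"
  proof (cases "q > 0")
    case True
    have "0 \<le> a - 2*(1/q)*b + (1/q)^2*b*q" by (rule key)
    also have "\<dots> = a - b/q" using True by (simp add: field_simps power2_eq_square)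
    finally show ?thesis using True by (simp add: field_simps)
  next
    case False
    hence q: "q = 0" using q0 by simp
    show ?thesis
    proof (rule ccontr)
      assume "\<not> b \<le> a * q"
      hence bp: "b > 0" using q by simp
      have "0 \<le> a - 2*((a+1)/b)*b + ((a+1)/b)^2*b*q" by (rule key)
      thus False using bp q a0 by simp
    qed
  qed
  hence "(cmod c)^2 \<le> (nrm x * nrm y)^2"
    using a0 q0 by (simp add: b_def a_def q_def power_mult_distrib)
  thus ?thesis unfolding c_def
    by (rule power2_le_imp_le) (intro mult_nonneg_nonneg nrm_nonneg)
qed

lemma nrm_sc: "nrm (sc c x) = cmod c * nrm x"
proof -
  have "f (sc c x) (sc c x) = c * cnj c * f x x" by (simp add: f_sc f_sc2)
  also have "c * cnj c = complex_of_real ((cmod c)^2)" by (rule complex_norm_square[symmetric])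
  finally have "Re (f (sc c x) (sc c x)) = (cmod c)^2 * Re (f x x)" by simp
  thus ?thesis by (simp add: real_sqrt_mult)
qed

lemma buzano:
  assumes e: "nrm e = 1"
  shows "cmod (f a e * f e b) \<le> (nrm a * nrm b + cmod (f a b)) / 2"
proof -
  define k where "k = 2 * f b e"
  define c where "c = sc k e - b"
  have ee: "f e e = 1" using f_self[of e] e by simp
  have "f c c = k * cnj k * f e e - k * f e b - cnj k * f b e + f b b"
    unfolding c_def by (simp add: f_diff f_diff2 f_sc f_sc2 algebra_simps)
  also have "\<dots> = f b b"
    unfolding k_def using ee f_sym[of b e] by (simp add: algebra_simps)
  finally have nc: "nrm c = nrm b" by simp
  have "f a c = cnj k * f a e - f a b" unfolding c_def by (simp add: f_diff2 f_sc2)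
  hence "2 * (f a e * f e b) = f a b + f a c" unfolding k_def using f_sym[of e b]
    by (simp add: algebra_simps)
  hence "2 * cmod (f a e * f e b) \<le> cmod (f a b) + cmod (f a c)"
    by (metis norm_mult norm_numeral norm_triangle_ineq)
  moreover have "cmod (f a c) \<le> nrm a * nrm b" using cs[of a c] nc by simp
  ultimately show ?thesis by simp
qed

end


lemma ip_semi_aux: assumes "complex_hilbert_space sc ip" shows "semi sc ip"
proof -
  have h0: "\<forall>x. sc 1 x = x" using assms unfolding complex_hilbert_space_def by (elim conjE) assumption
  have h1: "\<forall>a b x. sc a (sc b x) = sc (a * b) x" using assms unfolding complex_hilbert_space_def by (elim conjE) assumption
  have h2: "\<forall>a b x. sc (a + b) x = sc a x + sc b x" using assms unfolding complex_hilbert_space_def by (elim conjE) assumption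
  have h3: "\<forall>a x y. sc a (x + y) = sc a x + sc a y" using assms unfolding complex_hilbert_space_def by (elim conjE) assumption
  have h4: "\<forall>x y z. ip (x + y) z = ip x z + ip y z" using assms unfolding complex_hilbert_space_def by (elim conjE) assumption
  have h5: "\<forall>a x y. ip (sc a x) y = a * ip x y" using assms unfolding complex_hilbert_space_def by (elim conjE) assumption
  have h6: "\<forall>x y. ip y x = cnj (ip x y)" using assms unfolding complex_hilbert_space_def by (elim conjE) assumption
  have h7: "\<forall>x. Im (ip x x) = 0 \<and> Re (ip x x) \<ge> 0" using assms unfolding complex_hilbert_space_def by (elim conjE) assumption
  show ?thesis by unfold_locales (use h0 h1 h2 h3 h4 h5 h6 h7 in blast)+
qed

locale setting =
  fixes sc :: "complex \<Rightarrow> 'a::ab_group_add \<Rightarrow> 'a" and ip :: "'a \<Rightarrow> 'a \<Rightarrow> complex" and A :: "'a \<Rightarrow> 'a"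
  assumes H: "complex_hilbert_space sc ip" and P: "positive_op sc ip A"
begin

lemma ip_semi: "semi sc ip"
  by (rule ip_semi_aux[OF H])

sublocale I: semi sc ip by (rule ip_semi)

lemma hnorm_eq: "hnorm ip x = I.nrm x" by (simp add: hnorm_def)

lemma ip_def0: "ip x x = 0 \<Longrightarrow> x = 0"
proof -
  have h: "\<forall>x. ip x x = 0 \<longrightarrow> x = 0"
    using H unfolding complex_hilbert_space_def by (elim conjE) assumption
  thus "ip x x = 0 \<Longrightarrow> x = 0" by blast
qed

lemma A_add: "A (x+y) = A x + A y" and A_sc: "A (sc a x) = sc a (A x)"
  using P unfolding positive_op_def bounded_op_def by auto

lemma A_im: "Im (ip (A x) x) = 0" and A_re: "Re (ip (A x) x) \<ge> 0"
  using P unfolding positive_op_def by auto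

lemma A_herm: "ip (A y) x = cnj (ip (A x) y)"
proof -
  define g where "g = (\<lambda>x y. ip (A x) y)"
  have gadd: "g (u+v) w = g u w + g v w" "g w (u+v) = g w u + g w v" for u v w
    unfolding g_def by (simp_all add: A_add I.f_add I.f_add2)
  have gsc: "g (sc a u) w = a * g u w" "g w (sc a u) = cnj a * g w u" for a u w
    unfolding g_def by (simp_all add: A_sc I.f_sc I.f_sc2)
  have greal: "cnj (g z z) = g z z" for z
    using A_im[of z] unfolding g_def by (simp add: complex_eq_iff)
  have e1: "g (x+y) (x+y) = g x x + g x y + g y x + g y y" by (simp add: gadd)
  have e2: "g (x + sc \<i> y) (x + sc \<i> y) = g x x + (-\<i>) * g x y + \<i> * g y x + g y y"
    by (simp add: gadd gsc algebra_simps)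
  have c1: "cnj (g x y) + cnj (g y x) = g x y + g y x"
    using greal[of "x+y"] greal[of x] greal[of y] unfolding e1 by (simp add: algebra_simps)
  have c2: "\<i> * cnj (g x y) - \<i> * cnj (g y x) = (-\<i>) * g x y + \<i> * g y x"
    using greal[of "x + sc \<i> y"] greal[of x] greal[of y] unfolding e2 by (simp add: algebra_simps)
  have c3: "cnj (g x y) - cnj (g y x) = - g x y + g y x"
  proof -
    have "\<i> * (cnj (g x y) - cnj (g y x)) = \<i> * (- g x y + g y x)"
      using c2 by (simp add: algebra_simps)
    thus ?thesis by simp
  qed
  have "2 * cnj (g x y) = (cnj (g x y) + cnj (g y x)) + (cnj (g x y) - cnj (g y x))" by simp
  also have "\<dots> = (g x y + g y x) + (- g x y + g y x)" unfolding c1 c3 ..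
  also have "\<dots> = 2 * g y x" by simp
  finally have "2 * cnj (g x y) = 2 * g y x" .
  hence "g y x = cnj (g x y)" by simp
  thus ?thesis unfolding g_def .
qed

lemma J_semi: "semi sc (A_ip ip A)"
  unfolding semi_def A_ip_def
  using I.sc_addl I.sc_addr I.sc_assoc I.sc_one
  by (auto simp: A_add A_sc I.f_add I.f_sc A_im A_re intro: A_herm)

sublocale J: semi sc "A_ip ip A" by (rule J_semi)

lemma bounded_op_nonneg:
  assumes "bounded_op sc ip T"
  shows "\<exists>C\<ge>0. \<forall>x. hnorm ip (T x) \<le> C * hnorm ip x"
proof -
  obtain C where C: "\<forall>x. hnorm ip (T x) \<le> C * hnorm ip x" using assms unfolding bounded_op_def by blast
  have "hnorm ip (T x) \<le> max C 0 * hnorm ip x" for x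
  proof -
    have "C * hnorm ip x \<le> max C 0 * hnorm ip x"
      by (rule mult_right_mono) (auto simp: hnorm_eq I.f_re)
    thus ?thesis using C by (meson order_trans)
  qed
  thus ?thesis by (intro exI[of _ "max C 0"]) auto
qed

lemma N_eq: "A_norm ip A x = J.nrm x"
  by (simp add: A_norm_def A_ip_def)

lemma N_le_hnorm: "\<exists>c\<ge>0. \<forall>z. A_norm ip A z \<le> c * hnorm ip z"
proof -
  obtain C where C0: "C \<ge> 0" and C: "\<forall>x. hnorm ip (A x) \<le> C * hnorm ip x"
    using bounded_op_nonneg P unfolding positive_op_def by blast
  have "A_norm ip A z \<le> sqrt C * hnorm ip z" for z
  proof -
    have "Re (ip (A z) z) \<le> cmod (ip (A z) z)" by (rule complex_Re_le_cmod)
    also have "\<dots> \<le> hnorm ip (A z) * hnorm ip z" using I.cs[of "A z" z] by (simp add: hnorm_eq)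
    also have "\<dots> \<le> C * hnorm ip z * hnorm ip z"
      by (rule mult_right_mono) (use C in auto, simp add: hnorm_eq I.f_re)
    finally have 1: "Re (ip (A z) z) \<le> C * hnorm ip z * hnorm ip z" .
    have 2: "(sqrt C * hnorm ip z)^2 = C * hnorm ip z * hnorm ip z"
      using C0 by (simp add: power_mult_distrib power2_eq_square[of "hnorm ip z"])
    have 3: "(A_norm ip A z)^2 = Re (ip (A z) z)" using A_re[of z] by (simp add: A_norm_def)
    have "(A_norm ip A z)^2 \<le> (sqrt C * hnorm ip z)^2" using 1 2 3 by simp
    thus ?thesis by (rule power2_le_imp_le) (simp add: C0 hnorm_eq I.f_re)
  qed
  thus ?thesis using C0 by (intro exI[of _ "sqrt C"]) auto
qed

end


context setting begin

lemma scale_bound: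
  assumes hom: "\<And>a x. X (sc a x) = sc a (X x)"
    and one: "\<And>x. J.nrm x = 1 \<Longrightarrow> J.nrm (X x) \<le> K"
    and zero: "\<And>x. J.nrm x = 0 \<Longrightarrow> J.nrm (X x) = 0"
  shows "J.nrm (X x) \<le> K * J.nrm x"
proof (cases "J.nrm x = 0")
  case True thus ?thesis using zero by simp
next
  case False
  define r where "r = J.nrm x"
  have r: "r > 0" using False J.nrm_nonneg r_def by (metis less_eq_real_def)
  define x' where "x' = sc (complex_of_real (1/r)) x"
  have cr: "cmod (complex_of_real (1/r)) = 1/r" using r by (simp add: norm_divide)
  have "J.nrm x' = (1/r) * r" unfolding x'_def J.nrm_sc cr by (simp add: r_def)
  hence "J.nrm x' = 1" using r by simp
  hence "J.nrm (X x') \<le> K" by (rule one)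
  moreover have "J.nrm (X x') = (1/r) * J.nrm (X x)" unfolding x'_def hom J.nrm_sc cr ..
  ultimately have "J.nrm (X x) / r \<le> K" by simp
  thus ?thesis using r unfolding r_def by (simp add: pos_divide_le_eq r_def)
qed

lemma scale_quad:
  assumes hom: "\<And>a x. X (sc a x) = sc a (X x)"
    and one: "\<And>x. J.nrm x = 1 \<Longrightarrow> cmod (A_ip ip A (X x) x) \<le> w"
    and zero: "\<And>x. J.nrm x = 0 \<Longrightarrow> A_ip ip A (X x) x = 0"
  shows "cmod (A_ip ip A (X x) x) \<le> w * J.nrm x ^ 2"
proof (cases "J.nrm x = 0")
  case True thus ?thesis using zero by simp
next
  case False
  define r where "r = J.nrm x"
  have r: "r > 0" using False J.nrm_nonneg r_def by (metis less_eq_real_def)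
  define x' where "x' = sc (complex_of_real (1/r)) x"
  have cr: "cmod (complex_of_real (1/r)) = 1/r" using r by (simp add: norm_divide)
  have "J.nrm x' = (1/r) * r" unfolding x'_def J.nrm_sc cr by (simp add: r_def)
  hence "J.nrm x' = 1" using r by simp
  hence "cmod (A_ip ip A (X x') x') \<le> w" by (rule one)
  moreover have "A_ip ip A (X x') x' = complex_of_real (1/r^2) * A_ip ip A (X x) x"
    unfolding x'_def hom J.f_sc J.f_sc2 by (simp add: power2_eq_square)
  ultimately have "cmod (A_ip ip A (X x) x) / r^2 \<le> w" using r by (simp add: norm_mult norm_divide norm_power)
  thus ?thesis using r unfolding r_def by (simp add: pos_divide_le_eq r_def)
qed

lemma sa_sq:
  assumes sa: "\<And>x y. A_ip ip A (Q x) y = A_ip ip A x (Q y)"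
  shows "J.nrm (Q x) ^ 2 \<le> J.nrm x * J.nrm (Q (Q x))"
proof -
  have "J.nrm (Q x) ^ 2 = Re (A_ip ip A (Q x) (Q x))" using J.f_re by simp
  also have "\<dots> = Re (A_ip ip A x (Q (Q x)))" by (simp add: sa)
  also have "\<dots> \<le> cmod (A_ip ip A x (Q (Q x)))" by (rule complex_Re_le_cmod)
  also have "\<dots> \<le> J.nrm x * J.nrm (Q (Q x))" by (rule J.cs)
  finally show ?thesis .
qed

lemma adj_sq:
  assumes adj: "\<And>x y. A_ip ip A (T x) y = A_ip ip A x (T' y)"
  shows "J.nrm (T x) ^ 2 \<le> J.nrm x * J.nrm (T' (T x))"
proof -
  have "J.nrm (T x) ^ 2 = Re (A_ip ip A (T x) (T x))" using J.f_re by simp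
  also have "\<dots> = Re (A_ip ip A x (T' (T x)))" by (simp add: adj)
  also have "\<dots> \<le> cmod (A_ip ip A x (T' (T x)))" by (rule complex_Re_le_cmod)
  also have "\<dots> \<le> J.nrm x * J.nrm (T' (T x))" by (rule J.cs)
  finally show ?thesis .
qed

lemma Abdd:
  assumes "T \<in> BA sc ip A"
  shows "\<exists>K\<ge>0. \<forall>x. J.nrm (T x) \<le> K * J.nrm x"
proof -
  obtain T' where bT: "bounded_op sc ip T" and bT': "bounded_op sc ip T'"
    and adj: "\<And>x y. A_ip ip A (T x) y = A_ip ip A x (T' y)"
    using assms unfolding BA_def by blast
  obtain C1 where C10: "C1 \<ge> 0" and C1: "\<And>x. hnorm ip (T x) \<le> C1 * hnorm ip x"
    using bounded_op_nonneg[OF bT] by blast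
  obtain C2 where C20: "C2 \<ge> 0" and C2: "\<And>x. hnorm ip (T' x) \<le> C2 * hnorm ip x"
    using bounded_op_nonneg[OF bT'] by blast
  obtain c where c0: "c \<ge> 0" and c: "\<And>z. J.nrm z \<le> c * hnorm ip z"
    using N_le_hnorm unfolding N_eq by blast
  define R where "R = T' \<circ> T"
  define K where "K = max (C2*C1) 1"
  have K1: "K \<ge> 1" unfolding K_def by simp
  have Rb: "hnorm ip (R x) \<le> K * hnorm ip x" for x
  proof -
    have "hnorm ip (R x) \<le> C2 * hnorm ip (T x)" unfolding R_def using C2 by simp
    also have "\<dots> \<le> C2 * (C1 * hnorm ip x)" using C1 C20 by (simp add: mult_left_mono)
    also have "\<dots> \<le> K * hnorm ip x" unfolding K_def
      by (simp add: mult.assoc[symmetric] mult_right_mono hnorm_eq I.f_re)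
    finally show ?thesis .
  qed
  have Rpow: "hnorm ip ((R^^m) x) \<le> K^m * hnorm ip x" for m x
  proof (induction m)
    case 0 show ?case by simp
  next
    case (Suc m)
    have "hnorm ip ((R^^Suc m) x) \<le> K * hnorm ip ((R^^m) x)" using Rb by simp
    also have "\<dots> \<le> K * (K^m * hnorm ip x)" using Suc K1 by (simp add: mult_left_mono)
    finally show ?case by (simp add: mult.assoc)
  qed
  have Rsa: "A_ip ip A (R x) y = A_ip ip A x (R y)" for x y
  proof -
    have "A_ip ip A (R x) y = cnj (A_ip ip A y (T' (T x)))" unfolding R_def comp_def by (rule J.f_sym)
    also have "\<dots> = cnj (A_ip ip A (T y) (T x))" by (simp add: adj)
    also have "\<dots> = A_ip ip A (T x) (T y)" by (rule J.f_sym[symmetric])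
    also have "\<dots> = A_ip ip A x (R y)" unfolding R_def by (simp add: adj)
    finally show ?thesis .
  qed
  have Rpsa: "A_ip ip A ((R^^m) x) y = A_ip ip A x ((R^^m) y)" for m x y
  proof (induction m arbitrary: x y)
    case 0 show ?case by simp
  next
    case (Suc m)
    have "A_ip ip A ((R^^Suc m) x) y = A_ip ip A ((R^^m) x) (R y)" using Rsa by simp
    also have "\<dots> = A_ip ip A x ((R^^m) (R y))" by (rule Suc)
    also have "\<dots> = A_ip ip A x ((R^^Suc m) y)" by (simp add: funpow_swap1)
    finally show ?case .
  qed
  have iter: "J.nrm (R x) ^ (2^n) \<le> J.nrm ((R^^(2^n)) x)" if x1: "J.nrm x = 1" for x n
  proof (induction n)
    case 0 show ?case by simp
  next
    case (Suc n)
    define Q where "Q = R^^(2^n)"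
    have "J.nrm (R x) ^ (2^Suc n) = (J.nrm (R x) ^ (2^n))^2"
      by (simp add: power_mult[symmetric] mult.commute)
    also have "\<dots> \<le> J.nrm (Q x) ^ 2" unfolding Q_def
      by (rule power_mono[OF Suc]) (intro zero_le_power J.nrm_nonneg)
    also have "\<dots> \<le> J.nrm x * J.nrm (Q (Q x))"
      by (rule sa_sq) (simp add: Q_def Rpsa)
    also have "Q (Q x) = (R^^(2^Suc n)) x" unfolding Q_def
      by (simp add: funpow_add mult_2)
    finally show ?case using x1 by simp
  qed
  have unitR: "J.nrm (R x) \<le> K" if x1: "J.nrm x = 1" for x
  proof (rule ccontr)
    assume "\<not> J.nrm (R x) \<le> K"
    hence gt: "J.nrm (R x) > K" by simp
    define q where "q = J.nrm (R x) / K"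
    have q1: "q > 1" unfolding q_def using gt K1 by simp
    define M where "M = c * hnorm ip x"
    obtain n where n: "M < q^n" using real_arch_pow[OF q1] by blast
    have "q^n \<le> q^(2^n)" by (rule power_increasing) (use q1 in auto)
    also have "q^(2^n) = J.nrm (R x) ^ (2^n) / K^(2^n)" unfolding q_def by (simp add: power_divide)
    also have "\<dots> \<le> M"
    proof -
      have "J.nrm (R x) ^ (2^n) \<le> J.nrm ((R^^(2^n)) x)" by (rule iter[OF x1])
      also have "\<dots> \<le> c * hnorm ip ((R^^(2^n)) x)" by (rule c)
      also have "\<dots> \<le> c * (K^(2^n) * hnorm ip x)" by (rule mult_left_mono[OF Rpow c0])
      finally have "J.nrm (R x) ^ (2^n) \<le> M * K^(2^n)" unfolding M_def by (simp add: algebra_simps)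
      thus ?thesis using K1 by (simp add: pos_divide_le_eq)
    qed
    finally show False using n by simp
  qed
  have homT: "T (sc a x) = sc a (T x)" for a x using bT unfolding bounded_op_def by blast
  have "J.nrm (T x) \<le> sqrt K * J.nrm x" for x
  proof (rule scale_bound[of T])
    show "T (sc a x) = sc a (T x)" for a x by (rule homT)
    show "J.nrm (T x) \<le> sqrt K" if "J.nrm x = 1" for x
    proof -
      have "J.nrm (T x) ^ 2 \<le> J.nrm x * J.nrm (T' (T x))" by (rule adj_sq[OF adj])
      also have "\<dots> \<le> K" using unitR[OF that] that by (simp add: R_def)
      finally show ?thesis by (rule real_le_rsqrt)
    qed
    show "J.nrm (T x) = 0" if "J.nrm x = 0" for x
    proof -
      have "J.nrm (T x) ^ 2 \<le> J.nrm x * J.nrm (T' (T x))" by (rule adj_sq[OF adj])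
      hence "J.nrm (T x) ^ 2 \<le> 0" using that by simp
      thus ?thesis by (metis J.nrm_nonneg le_less_trans less_le power2_less_eq_zero_iff)
    qed
  qed
  thus ?thesis using K1 by (intro exI[of _ "sqrt K"]) auto
qed

end


context setting begin

lemma unit_ex:
  assumes "\<exists>x. A x \<noteq> 0"
  shows "\<exists>u. J.nrm u = 1"
proof -
  obtain x where x: "A x \<noteq> 0" using assms by blast
  have "\<exists>z. J.nrm z \<noteq> 0"
  proof (rule ccontr)
    assume "\<not> (\<exists>z. J.nrm z \<noteq> 0)"
    hence z: "\<And>z. J.nrm z = 0" by blast
    have "cmod (A_ip ip A x (A x)) \<le> J.nrm x * J.nrm (A x)" by (rule J.cs)
    hence "A_ip ip A x (A x) = 0" using z[of x] by simp
    hence "ip (A x) (A x) = 0" by (simp add: A_ip_def)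
    thus False using ip_def0 x by blast
  qed
  then obtain z where z: "J.nrm z \<noteq> 0" by blast
  define r where "r = J.nrm z"
  have r: "r > 0" using z J.nrm_nonneg r_def by (metis less_eq_real_def)
  have cr: "cmod (complex_of_real (1/r)) = 1/r" using r by (simp add: norm_divide)
  have "J.nrm (sc (complex_of_real (1/r)) z) = (1/r) * r" unfolding J.nrm_sc cr by (simp add: r_def)
  hence "J.nrm (sc (complex_of_real (1/r)) z) = 1" using r by simp
  thus ?thesis by blast
qed

lemma opn_props:
  assumes hom: "\<And>a x. X (sc a x) = sc a (X x)"
    and K: "\<And>x. J.nrm (X x) \<le> K * J.nrm x"
    and u: "\<exists>u. J.nrm u = 1"
  shows "J.nrm (X x) \<le> A_opnorm ip A X * J.nrm x" and "A_opnorm ip A X \<ge> 0"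
proof -
  have eq: "A_opnorm ip A X = Sup {J.nrm (X x) | x. J.nrm x = 1}"
    unfolding A_opnorm_def N_eq ..
  have bdd: "bdd_above {J.nrm (X x) | x. J.nrm x = 1}"
  proof (rule bdd_aboveI[where M=K])
    fix y assume "y \<in> {J.nrm (X x) | x. J.nrm x = 1}"
    then obtain x where "y = J.nrm (X x)" "J.nrm x = 1" by blast
    thus "y \<le> K" using K[of x] by simp
  qed
  have up: "J.nrm (X x) \<le> A_opnorm ip A X" if "J.nrm x = 1" for x
    unfolding eq by (rule cSup_upper[OF _ bdd]) (use that in blast)
  show "J.nrm (X x) \<le> A_opnorm ip A X * J.nrm x"
  proof (rule scale_bound[of X])
    show "X (sc a x) = sc a (X x)" for a x by (rule hom)
    show "J.nrm (X x) \<le> A_opnorm ip A X" if "J.nrm x = 1" for x using up that .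
    show "J.nrm (X x) = 0" if "J.nrm x = 0" for x
      using K[of x] that J.nrm_nonneg[of "X x"] by simp
  qed
  obtain u where "J.nrm u = 1" using u by blast
  thus "A_opnorm ip A X \<ge> 0" using up[of u] J.nrm_nonneg[of "X u"] by linarith
qed

lemma numrad_props:
  assumes hom: "\<And>a x. X (sc a x) = sc a (X x)"
    and K: "\<And>x. J.nrm (X x) \<le> K * J.nrm x"
    and u: "\<exists>u. J.nrm u = 1"
  shows "cmod (A_ip ip A (X x) x) \<le> A_numrad ip A X * J.nrm x ^ 2" and "A_numrad ip A X \<ge> 0"
proof -
  have eq: "A_numrad ip A X = Sup {cmod (A_ip ip A (X x) x) | x. J.nrm x = 1}"
    unfolding A_numrad_def N_eq ..
  have b: "cmod (A_ip ip A (X x) x) \<le> K * J.nrm x * J.nrm x" for x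
  proof -
    have "cmod (A_ip ip A (X x) x) \<le> J.nrm (X x) * J.nrm x" by (rule J.cs)
    also have "\<dots> \<le> K * J.nrm x * J.nrm x" by (rule mult_right_mono[OF K J.nrm_nonneg])
    finally show ?thesis .
  qed
  have bdd: "bdd_above {cmod (A_ip ip A (X x) x) | x. J.nrm x = 1}"
  proof (rule bdd_aboveI[where M=K])
    fix y assume "y \<in> {cmod (A_ip ip A (X x) x) | x. J.nrm x = 1}"
    then obtain x where "y = cmod (A_ip ip A (X x) x)" "J.nrm x = 1" by blast
    thus "y \<le> K" using b[of x] by simp
  qed
  have up: "cmod (A_ip ip A (X x) x) \<le> A_numrad ip A X" if "J.nrm x = 1" for x
    unfolding eq by (rule cSup_upper[OF _ bdd]) (use that in blast)
  show "cmod (A_ip ip A (X x) x) \<le> A_numrad ip A X * J.nrm x ^ 2"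
  proof (rule scale_quad[of X])
    show "X (sc a x) = sc a (X x)" for a x by (rule hom)
    show "cmod (A_ip ip A (X x) x) \<le> A_numrad ip A X" if "J.nrm x = 1" for x using up that .
    show "A_ip ip A (X x) x = 0" if "J.nrm x = 0" for x
      using b[of x] that by simp
  qed
  obtain u where "J.nrm u = 1" using u by blast
  thus "A_numrad ip A X \<ge> 0" using up[of u] by (meson norm_ge_zero order_trans)
qed

lemma numrad_least:
  assumes u: "\<exists>u. J.nrm u = 1"
    and B: "\<And>x. J.nrm x = 1 \<Longrightarrow> cmod (A_ip ip A (X x) x) \<le> B"
  shows "A_numrad ip A X \<le> B"
  unfolding A_numrad_def N_eq
  by (rule cSup_least) (use u B in auto)

lemma main:
  assumes "\<exists>x. A x \<noteq> 0" and TB: "T \<in> BA sc ip A" and SB: "S \<in> BA sc ip A"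
  shows "A_numrad ip A (T \<circ> S)
           \<le> (1/2) * (A_numrad ip A (S \<circ> T) + A_opnorm ip A T * A_opnorm ip A S)"
proof -
  have u: "\<exists>u. J.nrm u = 1" by (rule unit_ex[OF assms(1)])
  obtain T' where bT: "bounded_op sc ip T"
    and adjT: "\<And>x y. A_ip ip A (T x) y = A_ip ip A x (T' y)"
    using TB unfolding BA_def by blast
  obtain S' where bS: "bounded_op sc ip S"
    and adjS: "\<And>x y. A_ip ip A (S x) y = A_ip ip A x (S' y)"
    using SB unfolding BA_def by blast
  have homT: "T (sc a x) = sc a (T x)" for a x using bT unfolding bounded_op_def by blast
  have homS: "S (sc a x) = sc a (S x)" for a x using bS unfolding bounded_op_def by blast
  obtain KT where KT0: "KT \<ge> 0" and KT: "\<And>x. J.nrm (T x) \<le> KT * J.nrm x" using Abdd[OF TB] by blast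
  obtain KS where KS0: "KS \<ge> 0" and KS: "\<And>x. J.nrm (S x) \<le> KS * J.nrm x" using Abdd[OF SB] by blast
  define opT where "opT = A_opnorm ip A T"
  define opS where "opS = A_opnorm ip A S"
  define w where "w = A_numrad ip A (S \<circ> T)"
  have oT: "J.nrm (T x) \<le> opT * J.nrm x" for x unfolding opT_def by (rule opn_props(1)[OF homT KT u])
  have oS: "J.nrm (S x) \<le> opS * J.nrm x" for x unfolding opS_def by (rule opn_props(1)[OF homS KS u])
  have oT0: "opT \<ge> 0" unfolding opT_def by (rule opn_props(2)[OF homT KT u])
  have oS0: "opS \<ge> 0" unfolding opS_def by (rule opn_props(2)[OF homS KS u])
  have homST: "(S \<circ> T) (sc a x) = sc a ((S \<circ> T) x)" for a x by (simp add: homS homT)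
  have KST: "J.nrm ((S \<circ> T) x) \<le> (KS * KT) * J.nrm x" for x
  proof -
    have "J.nrm (S (T x)) \<le> KS * J.nrm (T x)" by (rule KS)
    also have "\<dots> \<le> KS * (KT * J.nrm x)" by (rule mult_left_mono[OF KT KS0])
    finally show ?thesis by (simp add: mult.assoc)
  qed
  have wb: "cmod (A_ip ip A (S (T x)) x) \<le> w * J.nrm x ^ 2" for x
    using numrad_props(1)[OF homST KST u, of x] unfolding w_def by (simp add: comp_def)
  have w0: "w \<ge> 0" unfolding w_def by (rule numrad_props(2)[OF homST KST u])
  have adjS': "A_ip ip A (S' x) y = A_ip ip A x (S y)" for x y
  proof -
    have "A_ip ip A (S' x) y = cnj (A_ip ip A y (S' x))" by (rule J.f_sym)
    also have "\<dots> = cnj (A_ip ip A (S y) x)" by (simp add: adjS)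
    also have "\<dots> = A_ip ip A x (S y)" by (rule J.f_sym[symmetric])
    finally show ?thesis .
  qed
  have oS': "J.nrm (S' v) \<le> opS * J.nrm v" for v
  proof -
    have "J.nrm (S' v) ^ 2 \<le> J.nrm v * J.nrm (S (S' v))" by (rule adj_sq[OF adjS'])
    also have "\<dots> \<le> J.nrm v * (opS * J.nrm (S' v))" by (rule mult_left_mono[OF oS J.nrm_nonneg])
    finally have 1: "J.nrm (S' v) * J.nrm (S' v) \<le> (opS * J.nrm v) * J.nrm (S' v)"
      by (simp add: power2_eq_square algebra_simps)
    show ?thesis
    proof (cases "J.nrm (S' v) = 0")
      case True thus ?thesis using oS0 J.nrm_nonneg[of v] by simp
    next
      case False
      hence "J.nrm (S' v) > 0" using J.nrm_nonneg[of "S' v"] by linarith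
      thus ?thesis by (rule mult_right_le_imp_le[OF 1])
    qed
  qed
  have key: "cmod (A_ip ip A (T (S x)) x) \<le> (1/2) * (w + opT * opS)" if x1: "J.nrm x = 1" for x
  proof -
    define v where "v = S x"
    have rhs0: "0 \<le> (1/2) * (w + opT * opS)" using w0 oT0 oS0 by simp
    show ?thesis
    proof (cases "J.nrm v = 0")
      case True
      have "cmod (A_ip ip A (T (S x)) x) = cmod (A_ip ip A v (T' x))" by (simp add: adjT v_def)
      also have "\<dots> \<le> J.nrm v * J.nrm (T' x)" by (rule J.cs)
      finally show ?thesis using True rhs0 by simp
    next
      case False
      hence vp: "J.nrm v > 0" using J.nrm_nonneg[of v] by linarith
      have "cmod (A_ip ip A (T v) x * A_ip ip A x (S' v))
          \<le> (J.nrm (T v) * J.nrm (S' v) + cmod (A_ip ip A (T v) (S' v))) / 2"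
        by (rule J.buzano[OF x1])
      moreover have "A_ip ip A x (S' v) = A_ip ip A v v" by (simp add: adjS[symmetric] v_def)
      moreover have "cmod (A_ip ip A v v) = J.nrm v ^ 2" by (subst J.f_self[of v]) (simp only: norm_of_real abs_power2)
      moreover have "A_ip ip A (T v) (S' v) = A_ip ip A (S (T v)) v" by (simp add: adjS)
      ultimately have 1: "cmod (A_ip ip A (T v) x) * J.nrm v ^ 2
          \<le> (J.nrm (T v) * J.nrm (S' v) + cmod (A_ip ip A (S (T v)) v)) / 2"
        by (simp add: norm_mult)
      have 2: "J.nrm (T v) * J.nrm (S' v) \<le> (opT * J.nrm v) * (opS * J.nrm v)"
        by (rule mult_mono[OF oT oS' _ J.nrm_nonneg]) (use oT0 J.nrm_nonneg[of v] in simp)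
      have 3: "cmod (A_ip ip A (S (T v)) v) \<le> w * J.nrm v ^ 2" by (rule wb)
      have "cmod (A_ip ip A (T v) x) * J.nrm v ^ 2 \<le> ((1/2) * (w + opT * opS)) * J.nrm v ^ 2"
        using 1 2 3 by (simp add: algebra_simps power2_eq_square)
      hence "cmod (A_ip ip A (T v) x) \<le> (1/2) * (w + opT * opS)" using vp by simp
      thus ?thesis by (simp add: v_def)
    qed
  qed
  have "A_numrad ip A (T \<circ> S) \<le> (1/2) * (w + opT * opS)"
  proof (rule numrad_least[OF u])
    fix x assume "J.nrm x = 1"
    from key[OF this] show "cmod (A_ip ip A ((T \<circ> S) x) x) \<le> (1/2) * (w + opT * opS)" by simp
  qed
  thus ?thesis unfolding w_def opT_def opS_def .
qed

end

theorem corollary2p8: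
  fixes sc :: "complex \<Rightarrow> 'a::ab_group_add \<Rightarrow> 'a"
    and ip :: "'a \<Rightarrow> 'a \<Rightarrow> complex"
    and A T S :: "'a \<Rightarrow> 'a"
  assumes "complex_hilbert_space sc ip"
    and "positive_op sc ip A"
    and "\<exists>x. A x \<noteq> 0"
    and "T \<in> BA sc ip A"
    and "S \<in> BA sc ip A"
  shows "A_numrad ip A (T \<circ> S)
           \<le> (1/2) * (A_numrad ip A (S \<circ> T) + A_opnorm ip A T * A_opnorm ip A S)"
proof -
  interpret setting sc ip A by unfold_locales (use assms in auto)
  show ?thesis by (rule main) (use assms in auto)
qed

end
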